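(* For integers $n\geq 2$ and $1\leq s\leq n$, $$\widehat{A}(n+1,s)=\frac{1}{2^{n}}\sum_{k=0}^{\lfloor (n+1)/2\rfloor}(n-2k+1)\,p(n,n-2k+1)\,E(n,k,s).$$
   Context: For a permutation $\pi$ of $[n]=\{1,\ldots,n\}$, the number of alternating descents is ${\rm altdes}(\pi)=|\{2i: \pi(2i)<\pi(2i+1)\}\cup\{2i+1:\pi(2i+1)>\pi(2i+2)\}|$, where only indices $j\in\{1,\ldots,n-1\}$ are considered. The alternating Eulerian numbers $\widehat{A}(n,k)$ are defined by $\sum_{\pi\in\mathfrak{S}_n}x^{{\rm altdes}(\pi)}=\sum_{k=0}^{n-1}\widehat{A}(n,k)x^k$. The derivative polynomials $P_n(x)$ are defined by $P_n(\tan\theta)=\frac{d^n}{d\theta^n}\tan\theta$ (equivalently $P_0(x)=x$, $P_{n+1}(x)=(1+x^2)P_n'(x)$), and $p(n,j)$ denotes the coefficient of $x^j$ in $P_n(x)$. $E(n,k,s)$ denotes the coefficient of $x^s$ in the polynomial $(1-x)^{2k}(1+x)^{n-2k}$. *)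

theory Defs
  imports "HOL-Combinatorics.Permutations" "HOL-Computational_Algebra.Polynomial"
begin

definition altdes :: "nat \<Rightarrow> (nat \<Rightarrow> nat) \<Rightarrow> nat" where
  "altdes n \<pi> = card {j \<in> {1..<n}.
      (even j \<and> \<pi> j < \<pi> (Suc j)) \<or> (odd j \<and> \<pi> j > \<pi> (Suc j))}"

definition altEuler :: "nat \<Rightarrow> nat \<Rightarrow> nat" where
  "altEuler n k = nat (coeff (\<Sum>\<pi>\<in>{\<pi>. \<pi> permutes {1..n}}. monom (1::int) (altdes n \<pi>)) k)"

fun derivPoly :: "nat \<Rightarrow> int poly" where
  "derivPoly 0 = [:0, 1:]"
| "derivPoly (Suc n) = [:1, 0, 1:] * pderiv (derivPoly n)"

definition pcoeff :: "nat \<Rightarrow> nat \<Rightarrow> int" where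
  "pcoeff n j = coeff (derivPoly n) j"

text \<open>E(n,k,s): coefficient of x^s in (1-x)^(2k) (1+x)^(n-2k).
  (Only used with 2k \<le> n or with a vanishing prefactor.)\<close>
definition Ecoef :: "nat \<Rightarrow> nat \<Rightarrow> nat \<Rightarrow> int" where
  "Ecoef n k s = coeff ([:1, -1:] ^ (2*k) * [:1, 1:] ^ (n - 2*k)) s"

end

theory Submission
  imports Defs "HOL-Combinatorics.Multiset_Permutations"
begin


definition alt :: "nat \<Rightarrow> nat \<Rightarrow> nat \<Rightarrow> bool" where
  "alt p x z \<longleftrightarrow> (even p \<and> x < z) \<or> (odd p \<and> z < x)"

definition fac :: "int \<Rightarrow> nat \<Rightarrow> nat \<Rightarrow> nat \<Rightarrow> int poly" where
  "fac c p x z = (if alt p x z then [:1,c:] else [:1,-c:])"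

fun fl :: "int \<Rightarrow> nat \<Rightarrow> nat list \<Rightarrow> int poly list" where
  "fl c e (x # z # xs) = fac c (Suc e) x z # fl c (Suc e) (z # xs)"
| "fl c e _ = []"

lemma length_fl: "length (fl c e xs) = length xs - 1"
  by (induction c e xs rule: fl.induct) auto

lemma fl_append: "fl c e (xs @ y # ys) = fl c e (xs @ [y]) @ fl c (e + length xs) (y # ys)"
proof (induction xs arbitrary: e)
  case Nil then show ?case by simp
next
  case (Cons a xs)
  then show ?case by (cases xs) auto
qed

lemma fac_shift: "x \<noteq> z \<Longrightarrow> fac c (Suc p) x z = fac (-c) p x z"
  unfolding fac_def alt_def by auto

lemma fl_shift: "distinct xs \<Longrightarrow> fl c (Suc e) xs = fl (-c) e xs"
  by (induction c e xs rule: fl.induct) (auto simp: fac_shift)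

lemma fac_anti: "x \<noteq> z \<Longrightarrow> f x \<noteq> f z \<Longrightarrow> (f x < f z \<longleftrightarrow> z < x) \<Longrightarrow> fac c p (f x) (f z) = fac (-c) p x z"
  unfolding fac_def alt_def by auto

lemma fl_anti:
  assumes "distinct xs" "\<And>x z. x \<in> set xs \<Longrightarrow> z \<in> set xs \<Longrightarrow> x < z \<Longrightarrow> f z < f x"
  shows "fl c e (map f xs) = fl (-c) e xs"
  using assms
proof (induction c e xs rule: fl.induct)
  case (1 c e x z xs)
  have "x \<noteq> z" using 1(2) by auto
  moreover have "f x < f z \<longleftrightarrow> z < x"
    using 1(3)[of x z] 1(3)[of z x] \<open>x \<noteq> z\<close> by (auto simp: less_not_sym) (metis less_not_sym nat_neq_iff)
  moreover have "f x \<noteq> f z" using 1(3)[of x z] 1(3)[of z x] \<open>x \<noteq> z\<close> by (metis less_irrefl list.set_intros(1) list.set_intros(2) nat_neq_iff)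
  ultimately have "fac c (Suc e) (f x) (f z) = fac (-c) (Suc e) x z" using fac_anti by blast
  with 1 show ?case by auto
qed auto

lemma fl_form: "p \<in> set (fl c e xs) \<Longrightarrow> \<exists>s. p = [:1, s:] \<and> (s = c \<or> s = -c)"
  by (induction c e xs rule: fl.induct) (auto simp: fac_def)

definition compl :: "nat set \<Rightarrow> nat \<Rightarrow> nat" where
  "compl S x = the (map_of (zip (sorted_list_of_set S) (rev (sorted_list_of_set S))) x)"

lemma compl_nth:
  assumes "finite S" "i < card S"
  shows "compl S (sorted_list_of_set S ! i) = sorted_list_of_set S ! (card S - 1 - i)"
proof -
  let ?l = "sorted_list_of_set S"
  have "map_of (zip ?l (rev ?l)) (?l ! i) = Some (rev ?l ! i)"
    by (rule map_of_zip_nth) (use assms in auto)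
  then show ?thesis using assms by (simp add: compl_def rev_nth)
qed

lemma compl_props:
  assumes "finite S"
  shows "\<And>x. x \<in> S \<Longrightarrow> compl S x \<in> S"
    and "\<And>x. x \<in> S \<Longrightarrow> compl S (compl S x) = x"
    and "\<And>x z. x \<in> S \<Longrightarrow> z \<in> S \<Longrightarrow> x < z \<Longrightarrow> compl S z < compl S x"
proof -
  let ?l = "sorted_list_of_set S"
  have len: "length ?l = card S" by simp
  have setl: "set ?l = S" using assms by simp
  have sw: "sorted_wrt (<) ?l" by simp
  have ex: "\<exists>i<card S. x = ?l ! i" if "x \<in> S" for x
    using that setl len by (metis in_set_conv_nth)
  show "compl S x \<in> S" if xS: "x \<in> S" for x
  proof -
    obtain i where i: "i < card S" "x = ?l ! i" using ex[OF xS] by blast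
    have "card S - 1 - i < length ?l" using i len by linarith
    then have "?l ! (card S - 1 - i) \<in> S" using setl nth_mem by blast
    then show ?thesis using compl_nth[OF assms i(1)] i by simp
  qed
  show "compl S (compl S x) = x" if xS: "x \<in> S" for x
  proof -
    obtain i where i: "i < card S" "x = ?l ! i" using ex[OF xS] by blast
    have "card S - 1 - i < card S" using i by linarith
    have "card S - 1 - (card S - 1 - i) = i" using i by linarith
    then show ?thesis using i compl_nth[OF assms i(1)] compl_nth[OF assms \<open>card S - 1 - i < card S\<close>]
      by simp
  qed
  show "compl S z < compl S x" if xzS: "x \<in> S" "z \<in> S" "x < z" for x z
  proof -
    obtain i where i: "i < card S" "x = ?l ! i" using ex[OF xzS(1)] by blast
    obtain j where j: "j < card S" "z = ?l ! j" using ex[OF xzS(2)] by blast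
    have "i < j"
    proof (rule ccontr)
      assume "\<not> i < j"
      then have "j \<le> i" by simp
      then have "?l ! j \<le> ?l ! i" using sorted_nth_mono[of ?l j i] i len by simp
      then show False using i j xzS by simp
    qed
    have "card S - 1 - j < card S - 1 - i" using \<open>i < j\<close> j by linarith
    then have "?l ! (card S - 1 - j) < ?l ! (card S - 1 - i)"
      using sorted_wrt_nth_less[OF sw] len i by simp
    then show ?thesis using compl_nth[OF assms i(1)] compl_nth[OF assms j(1)] i j by simp
  qed
qed


definition Sg :: "int \<Rightarrow> nat set \<Rightarrow> int poly" where
  "Sg c V = (\<Sum>xs\<in>permutations_of_set V. prod_list (fl c 0 xs))"

lemma sum_invol:
  assumes "\<And>x. x \<in> A \<Longrightarrow> \<phi> x \<in> A" "\<And>x. x \<in> A \<Longrightarrow> \<phi> (\<phi> x) = x"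
  shows "(\<Sum>x\<in>A. g (\<phi> x)) = (\<Sum>x\<in>A. g x)"
proof -
  have "bij_betw \<phi> A A" by (rule bij_betw_byWitness[where f'=\<phi>]) (use assms in auto)
  then show ?thesis by (rule sum.reindex_bij_betw)
qed

lemma compl_inj: "finite S \<Longrightarrow> inj_on (compl S) S"
  by (metis compl_props(2) inj_onI)

lemma compl_image: "finite S \<Longrightarrow> compl S ` S = S"
  using compl_props(1,2) by (metis image_subsetI subset_antisym image_eqI subsetI)

lemma map_compl_perm:
  assumes "distinct B"
  shows "distinct (map (compl (set B)) B)" "set (map (compl (set B)) B) = set B"
    "map (compl (set B)) (map (compl (set B)) B) = B"
proof -
  show "distinct (map (compl (set B)) B)" using assms compl_inj[of "set B"] by (simp add: distinct_map)
  show "set (map (compl (set B)) B) = set B" using compl_image[of "set B"] by simp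
  show "map (compl (set B)) (map (compl (set B)) B) = B"
    unfolding map_map
  proof (rule map_idI)
    fix x assume "x \<in> set B" then show "(compl (set B) \<circ> compl (set B)) x = x" by (simp add: compl_props(2))
  qed
qed

lemma fl_compl:
  assumes "distinct xs" "finite S" "set xs \<subseteq> S"
  shows "fl c e (map (compl S) xs) = fl (-c) e xs"
  by (rule fl_anti) (use assms compl_props(3)[of S] in auto)

lemma Sg_even: "finite V \<Longrightarrow> Sg (-c) V = Sg c V"
proof -
  assume fin: "finite V"
  let ?A = "permutations_of_set V"
  have mem: "map (compl V) xs \<in> ?A" if "xs \<in> ?A" for xs
  proof -
    have "set xs = V" "distinct xs" using that by (auto simp: permutations_of_set_def)
    then show ?thesis using map_compl_perm(1,2)[of xs] by (auto simp: permutations_of_set_def)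
  qed
  have inv: "map (compl V) (map (compl V) xs) = xs" if "xs \<in> ?A" for xs
    using that map_compl_perm(3)[of xs] by (auto simp: permutations_of_set_def)
  have "Sg c V = (\<Sum>xs\<in>?A. prod_list (fl c 0 (map (compl V) xs)))"
    unfolding Sg_def by (rule sum_invol[symmetric, of _ "map (compl V)"]) (use mem inv in auto)
  also have "\<dots> = (\<Sum>xs\<in>?A. prod_list (fl (-c) 0 xs))"
    by (rule sum.cong) (use fin in \<open>auto simp: permutations_of_set_def fl_compl\<close>)
  finally show ?thesis by (simp add: Sg_def)
qed

lemma split_at_M: "M \<in> set xs \<Longrightarrow> xs = takeWhile (\<lambda>x. x \<noteq> M) xs @ M # tl (dropWhile (\<lambda>x. x \<noteq> M) xs)"
  by (induction xs) auto

lemma ins_bij: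
  assumes "finite V'" "M \<notin> V'"
  shows "bij_betw (\<lambda>(xs,k). take k xs @ M # drop k xs)
           (permutations_of_set V' \<times> {0..card V'}) (permutations_of_set (insert M V'))"
proof (rule bij_betw_byWitness[where f' = "\<lambda>xs. (takeWhile (\<lambda>x. x \<noteq> M) xs @ tl (dropWhile (\<lambda>x. x \<noteq> M) xs),
     length (takeWhile (\<lambda>x. x \<noteq> M) xs))"])
  show "\<forall>a\<in>permutations_of_set V' \<times> {0..card V'}.
       (\<lambda>xs. (takeWhile (\<lambda>x. x \<noteq> M) xs @ tl (dropWhile (\<lambda>x. x \<noteq> M) xs),
     length (takeWhile (\<lambda>x. x \<noteq> M) xs))) ((\<lambda>(xs,k). take k xs @ M # drop k xs) a) = a"
  proof
    fix a assume "a \<in> permutations_of_set V' \<times> {0..card V'}"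
    then obtain xs k where a: "a = (xs,k)" "set xs = V'" "distinct xs" "k \<le> length xs"
      by (auto simp: permutations_of_set_def distinct_card)
    have nM: "\<forall>x\<in>set (take k xs). x \<noteq> M" using a assms(2) by (auto dest: in_set_takeD)
    have "takeWhile (\<lambda>x. x \<noteq> M) (take k xs @ M # drop k xs) = take k xs"
      using nM by (simp add: takeWhile_append2)
    moreover have "dropWhile (\<lambda>x. x \<noteq> M) (take k xs @ M # drop k xs) = M # drop k xs"
      using nM by (simp add: dropWhile_append2)
    ultimately show "(\<lambda>xs. (takeWhile (\<lambda>x. x \<noteq> M) xs @ tl (dropWhile (\<lambda>x. x \<noteq> M) xs),
     length (takeWhile (\<lambda>x. x \<noteq> M) xs))) ((\<lambda>(xs,k). take k xs @ M # drop k xs) a) = a"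
      using a by simp
  qed
  show "\<forall>a'\<in>permutations_of_set (insert M V').
       (\<lambda>(xs,k). take k xs @ M # drop k xs) ((\<lambda>xs. (takeWhile (\<lambda>x. x \<noteq> M) xs @ tl (dropWhile (\<lambda>x. x \<noteq> M) xs),
     length (takeWhile (\<lambda>x. x \<noteq> M) xs))) a') = a'"
  proof
    fix xs assume "xs \<in> permutations_of_set (insert M V')"
    then have "M \<in> set xs" by (auto simp: permutations_of_set_def)
    then show "(\<lambda>(xs,k). take k xs @ M # drop k xs) ((\<lambda>xs. (takeWhile (\<lambda>x. x \<noteq> M) xs @ tl (dropWhile (\<lambda>x. x \<noteq> M) xs),
     length (takeWhile (\<lambda>x. x \<noteq> M) xs))) xs) = xs"
      using split_at_M[of M xs] by simp
  qed
  show "(\<lambda>(xs,k). take k xs @ M # drop k xs) ` (permutations_of_set V' \<times> {0..card V'}) \<subseteq> permutations_of_set (insert M V')"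
  proof
    fix y assume "y \<in> (\<lambda>(xs,k). take k xs @ M # drop k xs) ` (permutations_of_set V' \<times> {0..card V'})"
    then obtain xs k where y: "y = take k xs @ M # drop k xs" "set xs = V'" "distinct xs"
      by (auto simp: permutations_of_set_def)
    have e: "xs = take k xs @ drop k xs" by simp
    have "set y = set (take k xs) \<union> insert M (set (drop k xs))" using y by simp
    also have "\<dots> = insert M (set xs)" using e by (metis Un_insert_right set_append)
    finally have "set y = insert M V'" using y by simp
    moreover have "set (take k xs) \<inter> set (drop k xs) = {}" using y(3) by (simp add: set_take_disj_set_drop_if_distinct)
    then have "distinct y" using y(1,3) assms(2) y(2) e
      by (auto dest: in_set_dropD in_set_takeD)
    ultimately show "y \<in> permutations_of_set (insert M V')" by (auto simp: permutations_of_set_def)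
  qed
  show "(\<lambda>xs. (takeWhile (\<lambda>x. x \<noteq> M) xs @ tl (dropWhile (\<lambda>x. x \<noteq> M) xs),
     length (takeWhile (\<lambda>x. x \<noteq> M) xs))) ` permutations_of_set (insert M V') \<subseteq> permutations_of_set V' \<times> {0..card V'}"
  proof
    fix y assume "y \<in> (\<lambda>xs. (takeWhile (\<lambda>x. x \<noteq> M) xs @ tl (dropWhile (\<lambda>x. x \<noteq> M) xs),
     length (takeWhile (\<lambda>x. x \<noteq> M) xs))) ` permutations_of_set (insert M V')"
    then obtain xs where xs: "y = (takeWhile (\<lambda>x. x \<noteq> M) xs @ tl (dropWhile (\<lambda>x. x \<noteq> M) xs),
     length (takeWhile (\<lambda>x. x \<noteq> M) xs))" "set xs = insert M V'" "distinct xs"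
      by (auto simp: permutations_of_set_def)
    define A where "A = takeWhile (\<lambda>x. x \<noteq> M) xs"
    define D where "D = tl (dropWhile (\<lambda>x. x \<noteq> M) xs)"
    have eq: "xs = A @ M # D" unfolding A_def D_def using xs(2) split_at_M[of M xs] by simp
    have dAD: "distinct (A @ D)" and "M \<notin> set A" "M \<notin> set D" using xs(3) eq by auto
    then have "set (A @ D) = V'" using xs(2) eq assms(2) by auto
    moreover have "length A \<le> card V'" using \<open>set (A @ D) = V'\<close> dAD distinct_card by fastforce
    ultimately show "y \<in> permutations_of_set V' \<times> {0..card V'}"
      using xs(1) dAD by (auto simp: permutations_of_set_def A_def D_def)
  qed
qed

lemma sum_ins:
  assumes "finite V'" "M \<notin> V'"
  shows "(\<Sum>xs\<in>permutations_of_set (insert M V'). h xs)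
       = (\<Sum>xs\<in>permutations_of_set V'. \<Sum>k=0..card V'. h (take k xs @ M # drop k xs))"
proof -
  have "(\<Sum>xs\<in>permutations_of_set (insert M V'). h xs)
      = (\<Sum>a\<in>permutations_of_set V' \<times> {0..card V'}. h ((\<lambda>(xs,k). take k xs @ M # drop k xs) a))"
    by (rule sum.reindex_bij_betw[OF ins_bij[OF assms], symmetric])
  also have "\<dots> = (\<Sum>xs\<in>permutations_of_set V'. \<Sum>k=0..card V'. h (take k xs @ M # drop k xs))"
    by (simp add: sum.cartesian_product split_def)
  finally show ?thesis .
qed




definition gk :: "int \<Rightarrow> nat \<Rightarrow> int poly" where
  "gk c k = (if even k then [:1,c:] else [:1,-c:])"

definition T :: "int \<Rightarrow> nat \<Rightarrow> nat \<Rightarrow> int poly" where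
  "T c n k = (\<Sum>xs\<in>permutations_of_set {1..Suc n}. prod_list (fl c 0 (take k xs)) * prod_list (fl c k (drop k xs)))"

lemma term0:
  assumes "xs \<noteq> []" "distinct xs" "\<forall>x\<in>set xs. x < M"
  shows "prod_list (fl c 0 (M # xs)) = [:1,c:] * prod_list (fl (-c) 0 xs)"
proof -
  obtain b B where xs: "xs = b # B" using assms(1) by (cases xs) auto
  have "fac c 1 M b = [:1,c:]" using assms(3) xs by (simp add: fac_def alt_def)
  moreover have "fl c (Suc 0) (b # B) = fl (-c) 0 (b # B)" using fl_shift[of "b#B" c 0] assms(2) xs by simp
  ultimately show ?thesis using xs by simp
qed

lemma termEnd:
  assumes "xs \<noteq> []" "\<forall>x\<in>set xs. x < M"
  shows "prod_list (fl c 0 (xs @ [M])) = prod_list (fl c 0 xs) * gk c (length xs)"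
proof -
  obtain A a where xs: "xs = A @ [a]" using assms(1) by (cases xs rule: rev_exhaust) auto
  have "fl c 0 (A @ a # [M]) = fl c 0 (A @ [a]) @ fl c (length A) [a, M]" using fl_append[of c 0 A a "[M]"] by simp
  moreover have "fl c (length A) [a, M] = [fac c (Suc (length A)) a M]" by simp
  moreover have "fac c (Suc (length A)) a M = gk c (length xs)"
    using assms(2) xs by (auto simp: fac_def alt_def gk_def)
  ultimately show ?thesis using xs by simp
qed

lemma termMid:
  assumes "0 < k" "k < length xs" "distinct xs" "\<forall>x\<in>set xs. x < M"
  shows "prod_list (fl c 0 (take k xs @ M # drop k xs))
       = gk c k * gk c k * (prod_list (fl c 0 (take k xs)) * prod_list (fl (-c) k (drop k xs)))"
proof -
  obtain A a where ta: "take k xs = A @ [a]" using assms(1,2)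
    by (cases "take k xs" rule: rev_exhaust) auto
  obtain b B where db: "drop k xs = b # B" using assms(2)
    by (cases "drop k xs") auto
  have lenA: "length A = k - 1" using ta assms(2) by (metis length_append_singleton length_take min.absorb4 diff_Suc_1)
  have aM: "a < M" using assms(4) ta by (metis in_set_takeD last_in_set last_snoc snoc_eq_iff_butlast)
  have bM: "b < M" using assms(4) db by (metis in_set_dropD list.set_intros(1))
  have dB: "distinct (b # B)" using assms(3) db by (metis distinct_drop)
  have "fl c 0 (A @ a # (M # b # B)) = fl c 0 (A @ [a]) @ fl c (k - 1) (a # M # b # B)"
    using fl_append[of c 0 A a "M # b # B"] lenA by simp
  moreover have "fl c (k - 1) (a # M # b # B) = fac c k a M # fac c (Suc k) M b # fl c (Suc k) (b # B)"
    using assms(1) by (cases k) auto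
  moreover have "fl c (Suc k) (b # B) = fl (-c) k (b # B)" using fl_shift dB by blast
  moreover have "fac c k a M = gk c k" using aM by (auto simp: fac_def alt_def gk_def)
  moreover have "fac c (Suc k) M b = gk c k" using bM by (auto simp: fac_def alt_def gk_def)
  ultimately show ?thesis using ta db by (simp add: algebra_simps)
qed

definition phi :: "nat \<Rightarrow> nat list \<Rightarrow> nat list" where
  "phi k xs = take k xs @ map (compl (set (drop k xs))) (drop k xs)"

lemma phi_take: "take k (phi k xs) = take k xs"
  by (cases "k \<le> length xs") (auto simp: phi_def)

lemma phi_drop: "drop k (phi k xs) = map (compl (set (drop k xs))) (drop k xs)"
  by (cases "k \<le> length xs") (auto simp: phi_def)

lemma phi_perm:
  assumes "xs \<in> permutations_of_set V"
  shows "phi k xs \<in> permutations_of_set V" "phi k (phi k xs) = xs"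
proof -
  have d: "distinct xs" "set xs = V" using assms by (auto simp: permutations_of_set_def)
  have dd: "distinct (drop k xs)" using d by simp
  have disj: "set (take k xs) \<inter> set (drop k xs) = {}" using d by (simp add: set_take_disj_set_drop_if_distinct)
  have "set (phi k xs) = set (take k xs) \<union> set (drop k xs)"
    using map_compl_perm(2)[OF dd] by (simp add: phi_def)
  also have "\<dots> = V" using d by (metis append_take_drop_id set_append)
  finally have s: "set (phi k xs) = V" .
  have "distinct (phi k xs)" using map_compl_perm(1,2)[OF dd] disj d by (simp add: phi_def)
  then show "phi k xs \<in> permutations_of_set V" using s by (simp add: permutations_of_set_def)
  have "set (drop k (phi k xs)) = set (drop k xs)" using phi_drop map_compl_perm(2)[OF dd] by simp
  then show "phi k (phi k xs) = xs"
    unfolding phi_def[of k "phi k xs"] phi_take phi_drop using map_compl_perm(3)[OF dd]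
    by simp
qed

lemma T_flip:
  "(\<Sum>xs\<in>permutations_of_set {1..Suc n}. prod_list (fl c 0 (take k xs)) * prod_list (fl (-c) k (drop k xs)))
   = T c n k"
proof -
  let ?A = "permutations_of_set {1..Suc n}"
  let ?g = "\<lambda>xs. prod_list (fl c 0 (take k xs)) * prod_list (fl (-c) k (drop k xs))"
  have "(\<Sum>xs\<in>?A. ?g xs) = (\<Sum>xs\<in>?A. ?g (phi k xs))"
    by (rule sum_invol[symmetric]) (use phi_perm in auto)
  also have "\<dots> = T c n k" unfolding T_def
  proof (rule sum.cong)
    fix xs assume "xs \<in> ?A"
    then have dd: "distinct (drop k xs)" by (auto simp: permutations_of_set_def)
    have "fl (-c) k (map (compl (set (drop k xs))) (drop k xs)) = fl (- (-c)) k (drop k xs)"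
      by (rule fl_compl) (use dd in auto)
    then show "?g (phi k xs) = prod_list (fl c 0 (take k xs)) * prod_list (fl c k (drop k xs))"
      by (simp add: phi_take phi_drop)
  qed simp
  finally show ?thesis .
qed

lemma T_even: "T (-c) n k = T c n k"
proof -
  let ?V = "{1..Suc n}"
  let ?A = "permutations_of_set ?V"
  let ?g = "\<lambda>xs. prod_list (fl c 0 (take k xs)) * prod_list (fl c k (drop k xs))"
  have mem: "map (compl ?V) xs \<in> ?A" if "xs \<in> ?A" for xs
  proof -
    have "set xs = ?V" "distinct xs" using that by (auto simp: permutations_of_set_def)
    then show ?thesis using map_compl_perm(1,2)[of xs] by (auto simp: permutations_of_set_def)
  qed
  have inv: "map (compl ?V) (map (compl ?V) xs) = xs" if "xs \<in> ?A" for xs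
    using that map_compl_perm(3)[of xs] by (auto simp: permutations_of_set_def)
  have "T c n k = (\<Sum>xs\<in>?A. ?g (map (compl ?V) xs))"
    unfolding T_def by (rule sum_invol[symmetric, of _ "map (compl ?V)"]) (use mem inv in auto)
  also have "\<dots> = T (-c) n k" unfolding T_def
  proof (rule sum.cong)
    fix xs assume "xs \<in> ?A"
    then have d: "distinct xs" "set xs = ?V" by (auto simp: permutations_of_set_def)
    have "fl c 0 (map (compl ?V) (take k xs)) = fl (-c) 0 (take k xs)"
      by (rule fl_compl) (use d in \<open>auto dest: in_set_takeD\<close>)
    moreover have "fl c k (map (compl ?V) (drop k xs)) = fl (-c) k (drop k xs)"
      by (rule fl_compl) (use d in \<open>auto dest: in_set_dropD\<close>)
    ultimately show "?g (map (compl ?V) xs) = prod_list (fl (-c) 0 (take k xs)) * prod_list (fl (-c) k (drop k xs))"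
      by (simp add: take_map drop_map)
  qed simp
  finally show ?thesis by simp
qed


lemma sum_split_ends: "(\<Sum>k=0..Suc n. f k) = f 0 + (\<Sum>k=1..n. f k) + (f (Suc n) :: 'a::comm_monoid_add)"
proof -
  have "(\<Sum>k=0..Suc n. f k) = (\<Sum>k=0..n. f k) + f (Suc n)" by (rule sum.atLeast0_atMost_Suc)
  also have "(\<Sum>k=0..n. f k) = f 0 + (\<Sum>k=Suc 0..n. f k)" by (rule sum.atLeast_Suc_atMost) simp
  finally show ?thesis by simp
qed

lemma Sg_rec:
  "Sg c {1..Suc (Suc n)} = [:1,c:] * Sg (-c) {1..Suc n} + gk c (Suc n) * Sg c {1..Suc n}
     + (\<Sum>k=1..n. gk c k * gk c k * T c n k)"
proof -
  let ?V = "{1..Suc n}"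
  let ?M = "Suc (Suc n)"
  let ?A = "permutations_of_set ?V"
  let ?h = "\<lambda>xs. prod_list (fl c 0 xs)"
  have ins: "insert ?M ?V = {1..Suc (Suc n)}" by auto
  have "Sg c {1..Suc (Suc n)} = (\<Sum>xs\<in>?A. \<Sum>k=0..card ?V. ?h (take k xs @ ?M # drop k xs))"
    unfolding Sg_def ins[symmetric] by (rule sum_ins) auto
  also have "\<dots> = (\<Sum>xs\<in>?A. [:1,c:] * prod_list (fl (-c) 0 xs)
        + (\<Sum>k=1..n. gk c k * gk c k * (prod_list (fl c 0 (take k xs)) * prod_list (fl (-c) k (drop k xs))))
        + prod_list (fl c 0 xs) * gk c (Suc n))"
  proof (rule sum.cong)
    fix xs assume xs: "xs \<in> ?A"
    then have d: "distinct xs" "set xs = ?V" "length xs = Suc n"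
      by (auto simp: permutations_of_set_def length_finite_permutations_of_set)
    have lt: "\<forall>x\<in>set xs. x < ?M" using d by auto
    have ne: "xs \<noteq> []" using d by auto
    have "(\<Sum>k=0..card ?V. ?h (take k xs @ ?M # drop k xs))
        = ?h (?M # xs) + (\<Sum>k=1..n. ?h (take k xs @ ?M # drop k xs)) + ?h (xs @ [?M])"
      using sum_split_ends[of "\<lambda>k. ?h (take k xs @ ?M # drop k xs)" n] d by simp
    also have "\<dots> = [:1,c:] * prod_list (fl (-c) 0 xs)
        + (\<Sum>k=1..n. gk c k * gk c k * (prod_list (fl c 0 (take k xs)) * prod_list (fl (-c) k (drop k xs))))
        + prod_list (fl c 0 xs) * gk c (Suc n)"
      using term0[OF ne d(1) lt] termEnd[OF ne lt] termMid[OF _ _ d(1) lt] d(3)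
      by (intro arg_cong2[where f="(+)"] sum.cong) auto
    finally show "(\<Sum>k=0..card ?V. ?h (take k xs @ ?M # drop k xs)) = [:1,c:] * prod_list (fl (-c) 0 xs)
        + (\<Sum>k=1..n. gk c k * gk c k * (prod_list (fl c 0 (take k xs)) * prod_list (fl (-c) k (drop k xs))))
        + prod_list (fl c 0 xs) * gk c (Suc n)" .
  qed simp
  also have "\<dots> = [:1,c:] * Sg (-c) ?V + (\<Sum>k=1..n. gk c k * gk c k * T c n k) + gk c (Suc n) * Sg c ?V"
  proof -
    have sw: "(\<Sum>xs\<in>?A. \<Sum>k=1..n. gk c k * gk c k * (prod_list (fl c 0 (take k xs)) * prod_list (fl (-c) k (drop k xs))))
      = (\<Sum>k=1..n. gk c k * gk c k * T c n k)"
      by (subst sum.swap) (simp add: sum_distrib_left T_flip[symmetric])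
    show ?thesis
      by (simp only: sum.distrib sw) (simp add: Sg_def sum_distrib_left sum_distrib_right mult.commute)
  qed
  finally show ?thesis by (simp add: algebra_simps)
qed

lemma smult_sum_right: "smult c (sum f A) = (\<Sum>x\<in>A. smult c (f x))"
  by (induction A rule: infinite_finite_induct) (auto simp: smult_add_right)

lemma lin_aux:
  fixes X :: "'a::comm_ring"
  shows "X = a1*R + b1*R + S1 \<Longrightarrow> X = a2*R + b2*R + S2 \<Longrightarrow> X + X = (a1+a2)*R + (b1+b2)*R + (S1+S2)"
  by (simp add: algebra_simps)

lemma two_smult: "Y + Y = smult 2 (Y :: int poly)"
  by (metis one_add_one smult_add_left smult_1_left)

lemma Sg_rec2:
  "Sg 1 {1..Suc (Suc n)} = [:2:] * Sg 1 {1..Suc n} + [:1,0,1:] * (\<Sum>k=1..n. T 1 n k)"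
proof -
  let ?V = "{1..Suc n}"
  let ?X = "Sg 1 {1..Suc (Suc n)}"
  let ?R = "Sg 1 ?V"
  have e1: "Sg (-1) {1..Suc (Suc n)} = ?X" by (rule Sg_even) simp
  have e2: "Sg (-1) ?V = ?R" by (rule Sg_even) simp
  have e3: "T (-1) n k = T 1 n k" for k using T_even[of 1] by simp
  have g1: "gk 1 m + gk (-1) m = [:2:]" for m by (simp add: gk_def)
  have g2: "gk 1 m * gk 1 m + gk (-1) m * gk (-1) m = [:2,0,2:]" for m by (simp add: gk_def)
  have b: "[:2,0,2:] = smult 2 ([:1,0,1:] :: int poly)" by simp
  have r1: "?X = [:1,1:] * ?R + gk 1 (Suc n) * ?R + (\<Sum>k=1..n. gk 1 k * gk 1 k * T 1 n k)"
    using Sg_rec[of 1 n] e2 by simp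
  have r2: "?X = [:1,-1:] * ?R + gk (-1) (Suc n) * ?R + (\<Sum>k=1..n. gk (-1) k * gk (-1) k * T 1 n k)"
    using Sg_rec[of "-1" n] e1 e2 e3 by simp
  have "?X + ?X = ([:1,1:] + [:1,-1:]) * ?R + (gk 1 (Suc n) + gk (-1) (Suc n)) * ?R
      + ((\<Sum>k=1..n. gk 1 k * gk 1 k * T 1 n k) + (\<Sum>k=1..n. gk (-1) k * gk (-1) k * T 1 n k))"
    by (rule lin_aux[OF r1 r2])
  also have "(\<Sum>k=1..n. gk 1 k * gk 1 k * T 1 n k) + (\<Sum>k=1..n. gk (-1) k * gk (-1) k * T 1 n k)
      = (\<Sum>k=1..n. smult 2 ([:1,0,1:] * T 1 n k))"
    using b by (simp only: sum.distrib[symmetric] distrib_right[symmetric] g2 mult_smult_left)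
  also have "\<dots> = smult 2 ([:1,0,1:] * (\<Sum>k=1..n. T 1 n k))"
    by (simp only: smult_sum_right[symmetric] sum_distrib_left)
  also have "([:1,1:] + [:1,-1:]) * ?R = [:2:] * ?R" by simp
  also have "(gk 1 (Suc n) + gk (-1) (Suc n)) * ?R = [:2:] * ?R" by (simp only: g1)
  also have "[:2:] * ?R + [:2:] * ?R = smult 2 ([:2:] * ?R)" by (rule two_smult)
  finally have "smult 2 ?X = smult 2 ([:2:] * ?R + [:1,0,1:] * (\<Sum>k=1..n. T 1 n k))"
    by (simp only: two_smult smult_add_right)
  from smult_cancel[OF _ this] show ?thesis by simp
qed


lemma deriv_aux:
  fixes a x c P Q m :: "'a::comm_ring_1"
  shows "a = 1 + x * c \<Longrightarrow> P + a * (m * P - x * Q) = (m + 1) * (a * P) - x * (a * Q + P * c)"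
  by (simp add: algebra_simps)

lemma prod_list_deriv:
  fixes L :: "int poly list"
  assumes "\<forall>p\<in>set L. \<exists>s. p = [:1, s:]"
  shows "(\<Sum>i<length L. prod_list (take i L @ drop (Suc i) L))
     = of_nat (length L) * prod_list L - [:0,1:] * pderiv (prod_list L)"
  using assms
proof (induction L)
  case Nil then show ?case by simp
next
  case (Cons a L)
  obtain s where a: "a = [:1, s:]" using Cons.prems by auto
  have IH: "(\<Sum>i<length L. prod_list (take i L @ drop (Suc i) L))
     = of_nat (length L) * prod_list L - [:0,1:] * pderiv (prod_list L)" using Cons by auto
  have pa: "pderiv a = [:s:]" using a by (simp add: pderiv_pCons)
  have a1: "a = 1 + [:0,1:] * [:s:]" using a by (simp add: one_pCons)
  have "(\<Sum>i<length (a # L). prod_list (take i (a # L) @ drop (Suc i) (a # L)))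
      = prod_list L + (\<Sum>i<length L. a * prod_list (take i L @ drop (Suc i) L))"
    unfolding length_Cons sum.lessThan_Suc_shift by (simp add: mult.assoc)
  also have "\<dots> = prod_list L + a * (of_nat (length L) * prod_list L - [:0,1:] * pderiv (prod_list L))"
    by (simp only: sum_distrib_left[symmetric] IH)
  also have "\<dots> = (of_nat (length L) + 1) * (a * prod_list L) - [:0,1:] * (a * pderiv (prod_list L) + prod_list L * [:s:])"
    by (rule deriv_aux[OF a1])
  also have "\<dots> = of_nat (length (a # L)) * prod_list (a # L) - [:0,1:] * pderiv (prod_list (a # L))"
    by (simp add: pderiv_mult pa)
  finally show ?case .
qed

lemma pderiv_sum': "pderiv (sum f A) = (\<Sum>x\<in>A. pderiv (f x))"
  by (induction A rule: infinite_finite_induct) (auto simp: pderiv_add)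

lemma T_split:
  assumes "distinct xs" "length xs = Suc n" "0 < k" "k \<le> n"
  shows "prod_list (fl c 0 (take k xs)) * prod_list (fl c k (drop k xs))
       = prod_list (take (k - 1) (fl c 0 xs) @ drop k (fl c 0 xs))"
proof -
  obtain A a where ta: "take k xs = A @ [a]" using assms
    by (cases "take k xs" rule: rev_exhaust) auto
  obtain b B where db: "drop k xs = b # B" using assms
    by (cases "drop k xs") auto
  have "length (take k xs) = k" using assms by simp
  then have lenA: "length A = k - 1" using ta by simp
  have "xs = take k xs @ drop k xs" by simp
  then have xs: "xs = A @ a # (b # B)" using ta db by simp
  have L: "fl c 0 xs = fl c 0 (A @ [a]) @ fac c k a b # fl c k (b # B)"
    using fl_append[of c 0 A a "b # B"] lenA assms(3) xs by (cases k) auto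
  have lf: "length (fl c 0 (A @ [a])) = k - 1" using length_fl lenA by simp
  have "take (k - 1) (fl c 0 xs) = fl c 0 (A @ [a])" using L lf by simp
  moreover have "drop k (fl c 0 xs) = fl c k (b # B)"
  proof -
    have "k = Suc (k - 1)" using assms(3) by simp
    then have "drop k (fl c 0 xs) = drop (Suc (k - 1)) (fl c 0 (A @ [a]) @ fac c k a b # fl c k (b # B))" using L by simp
    also have "\<dots> = fl c k (b # B)" using lf by simp
    finally show ?thesis .
  qed
  ultimately show ?thesis using ta db by simp
qed

lemma sumT:
  "(\<Sum>k=1..n. T 1 n k) = of_nat n * Sg 1 {1..Suc n} - [:0,1:] * pderiv (Sg 1 {1..Suc n})"
proof -
  let ?A = "permutations_of_set {1..Suc n}"
  have "(\<Sum>k=1..n. T 1 n k) = (\<Sum>xs\<in>?A. \<Sum>k=1..n. prod_list (fl 1 0 (take k xs)) * prod_list (fl 1 k (drop k xs)))"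
    unfolding T_def by (rule sum.swap)
  also have "\<dots> = (\<Sum>xs\<in>?A. of_nat n * prod_list (fl 1 0 xs) - [:0,1:] * pderiv (prod_list (fl 1 0 xs)))"
  proof (rule sum.cong)
    fix xs assume "xs \<in> ?A"
    then have d: "distinct xs" "length xs = Suc n"
      by (auto simp: permutations_of_set_def length_finite_permutations_of_set)
    have lL: "length (fl 1 0 xs) = n" using d length_fl by simp
    have "(\<Sum>k=1..n. prod_list (fl 1 0 (take k xs)) * prod_list (fl 1 k (drop k xs)))
        = (\<Sum>k=1..n. prod_list (take (k - 1) (fl 1 0 xs) @ drop k (fl 1 0 xs)))"
      by (rule sum.cong) (use T_split[OF d] in auto)
    also have "\<dots> = (\<Sum>i<n. prod_list (take i (fl 1 0 xs) @ drop (Suc i) (fl 1 0 xs)))"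
      by (simp add: sum.atLeast1_atMost_eq)
    also have "\<dots> = of_nat n * prod_list (fl 1 0 xs) - [:0,1:] * pderiv (prod_list (fl 1 0 xs))"
      using prod_list_deriv[of "fl 1 0 xs"] fl_form[of _ 1 0 xs] lL by auto
    finally show "(\<Sum>k=1..n. prod_list (fl 1 0 (take k xs)) * prod_list (fl 1 k (drop k xs)))
        = of_nat n * prod_list (fl 1 0 xs) - [:0,1:] * pderiv (prod_list (fl 1 0 xs))" .
  qed simp
  also have "\<dots> = of_nat n * Sg 1 {1..Suc n} - [:0,1:] * pderiv (Sg 1 {1..Suc n})"
    by (simp add: Sg_def sum_subtractf sum_distrib_left pderiv_sum')
  finally show ?thesis .
qed




lemma coeff_x2: "coeff (X :: int poly) j = coeff X j \<Longrightarrow> coeff ([:1,0,1:] * X) j = coeff X j + (if 2 \<le> j then coeff X (j - 2) else 0)"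
  by (cases j; cases "j - 1") (auto simp: coeff_pCons)

lemma coeff_x1: "coeff (X :: int poly) j = coeff X j \<Longrightarrow> coeff ([:0,1:] * X) j = (if j = 0 then 0 else coeff X (j - 1))"
  by (cases j) (auto simp: coeff_pCons)

lemma pcoeff_Suc:
  "pcoeff (Suc n) j = of_nat (Suc j) * pcoeff n (Suc j) + (if 2 \<le> j then of_nat (j - 1) * pcoeff n (j - 1) else 0)"
proof -
  have "pcoeff (Suc n) j = coeff (pderiv (derivPoly n)) j + (if 2 \<le> j then coeff (pderiv (derivPoly n)) (j - 2) else 0)"
    by (simp only: pcoeff_def derivPoly.simps coeff_x2[OF refl])
  moreover have "2 \<le> j \<Longrightarrow> Suc (j - 2) = j - 1" by simp
  ultimately show ?thesis by (simp add: coeff_pderiv pcoeff_def)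
qed

lemma pcoeff_deg: "n + 1 < j \<Longrightarrow> pcoeff n j = 0"
proof (induction n arbitrary: j)
  case 0 then show ?case by (simp add: pcoeff_def coeff_pCons split: nat.split)
next
  case (Suc n)
  then show ?case by (simp add: pcoeff_Suc)
qed

lemma pcoeff_parity: "even (n + j) \<Longrightarrow> pcoeff n j = 0"
proof (induction n arbitrary: j)
  case 0 then show ?case by (cases j; cases "j - 1") (auto simp: pcoeff_def coeff_pCons)
next
  case (Suc n)
  have a: "pcoeff n (Suc j) = 0" using Suc by simp
  have b: "2 \<le> j \<Longrightarrow> pcoeff n (j - 1) = 0" using Suc by (intro Suc.IH) (simp add: even_add)
  show ?case using a b by (simp add: pcoeff_Suc)
qed

definition q :: "nat \<Rightarrow> nat \<Rightarrow> int" where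
  "q n u = int (n + 1 - u) * pcoeff n (n + 1 - u)"

definition Qp :: "nat \<Rightarrow> int poly" where
  "Qp n = (\<Sum>u\<le>n. monom (q n u) u)"

lemma coeff_Qp: "coeff (Qp n) u = q n u"
proof -
  have "coeff (Qp n) u = (\<Sum>v\<le>n. if u = v then q n v else 0)"
    by (simp add: Qp_def coeff_sum coeff_monom)
  also have "\<dots> = (if u \<le> n then q n u else 0)" by (simp add: sum.delta)
  also have "\<dots> = q n u" by (simp add: q_def)
  finally show ?thesis .
qed

lemma pcoeff_Suc': "pcoeff (Suc n) (Suc a) = int (a + 2) * pcoeff n (a + 2) + int a * pcoeff n a"
  by (cases a) (simp_all add: pcoeff_Suc)

lemma q_rec: "q (Suc n) u = 2 * q n u + (int n - int u) * q n u
    + (if 2 \<le> u then (int n - int (u - 2)) * q n (u - 2) else 0)"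
proof (cases "u \<le> n + 1")
  case True
  define a where "a = n + 1 - u"
  have lhs: "q (Suc n) u = int (Suc a) * pcoeff (Suc n) (Suc a)"
    unfolding q_def a_def using True by (simp add: Suc_diff_le)
  have q1: "q n u = int a * pcoeff n a" unfolding q_def a_def by simp
  have nu: "int n - int u = int a - 1" using True a_def by simp
  show ?thesis
  proof (cases "2 \<le> u")
    case True
    have q2: "q n (u - 2) = int (a + 2) * pcoeff n (a + 2)"
      unfolding q_def a_def using True \<open>u \<le> n + 1\<close> by (simp add: Suc_diff_le)
    have y: "int n - int (u - 2) = int a + 1" using True \<open>u \<le> n + 1\<close> a_def by simp
    have "q (Suc n) u = (int a + 1) * (int (a + 2) * pcoeff n (a + 2)) + (int a + 1) * (int a * pcoeff n a)"
      unfolding lhs pcoeff_Suc' by (simp add: algebra_simps)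
    also have "\<dots> = 2 * q n u + (int n - int u) * q n u
      + (if 2 \<le> u then (int n - int (u - 2)) * q n (u - 2) else 0)"
      unfolding q1 q2 nu y using True by (simp add: algebra_simps)
    finally show ?thesis .
  next
    case False
    have z: "pcoeff n (a + 2) = 0" using False a_def by (intro pcoeff_deg) simp
    have "q (Suc n) u = (int a + 1) * (int a * pcoeff n a)"
      unfolding lhs pcoeff_Suc' z by (simp add: algebra_simps)
    also have "\<dots> = 2 * q n u + (int n - int u) * q n u
      + (if 2 \<le> u then (int n - int (u - 2)) * q n (u - 2) else 0)"
      unfolding q1 nu using False by (simp add: algebra_simps)
    finally show ?thesis .
  qed
next
  case False
  then have l: "q (Suc n) u = 0" "q n u = 0" by (simp_all add: q_def)
  have "(int n - int (u - 2)) * q n (u - 2) = 0"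
  proof (cases "u = n + 2")
    case True then show ?thesis by simp
  next
    case False
    then have "n + 1 - (u - 2) = 0" using \<open>\<not> u \<le> n + 1\<close> by simp
    then show ?thesis by (simp add: q_def)
  qed
  then show ?thesis using l by (simp del: of_nat_diff)
qed

lemma Qp_rec: "Qp (Suc n) = [:2:] * Qp n + [:1,0,1:] * (of_nat n * Qp n - [:0,1:] * pderiv (Qp n))"
proof (rule poly_eqI)
  fix u
  have z: "coeff (of_nat n * Qp n - [:0,1:] * pderiv (Qp n)) v = (int n - int v) * q n v" for v
    by (cases v) (auto simp: coeff_x1[OF refl] coeff_pderiv coeff_Qp of_nat_poly algebra_simps)
  show "coeff (Qp (Suc n)) u = coeff ([:2:] * Qp n + [:1,0,1:] * (of_nat n * Qp n - [:0,1:] * pderiv (Qp n))) u"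
    unfolding coeff_add coeff_x2[OF refl] z by (simp add: coeff_Qp q_rec)
qed

lemma Sg_eq_Qp: "Sg 1 {1..Suc n} = Qp n"
proof (induction n)
  case 0
  have "Sg 1 {1..Suc 0} = 1" by (simp add: Sg_def)
  moreover have "Qp 0 = 1" by (simp add: Qp_def q_def pcoeff_def)
  ultimately show ?case by simp
next
  case (Suc n)
  show ?case using Sg_rec2[of n] sumT[of n] Qp_rec[of n] Suc by simp
qed




declare upt_Suc[simp del]

lemma perm_list_bij:
  "bij_betw (\<lambda>\<pi>. map \<pi> [1..<Suc m]) {\<pi>. \<pi> permutes {1..m}} (permutations_of_set {1..m})"
proof (rule bij_betw_byWitness[where f' = "\<lambda>xs x. if x \<in> {1..m} then xs ! (x - 1) else x"])
  show "\<forall>\<pi>\<in>{\<pi>. \<pi> permutes {1..m}}. (\<lambda>x. if x \<in> {1..m} then map \<pi> [1..<Suc m] ! (x - 1) else x) = \<pi>"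
  proof
    fix \<pi> assume "\<pi> \<in> {\<pi>. \<pi> permutes {1..m}}"
    then have p: "\<pi> permutes {1..m}" by simp
    show "(\<lambda>x. if x \<in> {1..m} then map \<pi> [1..<Suc m] ! (x - 1) else x) = \<pi>"
    proof
      fix x show "(if x \<in> {1..m} then map \<pi> [1..<Suc m] ! (x - 1) else x) = \<pi> x"
        using permutes_not_in[OF p, of x] by (auto simp: nth_map nth_upt)
    qed
  qed
  show "\<forall>xs\<in>permutations_of_set {1..m}. map (\<lambda>x. if x \<in> {1..m} then xs ! (x - 1) else x) [1..<Suc m] = xs"
  proof
    fix xs assume "xs \<in> permutations_of_set {1..m}"
    then have l: "length xs = m" by (simp add: length_finite_permutations_of_set)
    show "map (\<lambda>x. if x \<in> {1..m} then xs ! (x - 1) else x) [1..<Suc m] = xs"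
      by (rule nth_equalityI) (auto simp: l)
  qed
  show "(\<lambda>\<pi>. map \<pi> [1..<Suc m]) ` {\<pi>. \<pi> permutes {1..m}} \<subseteq> permutations_of_set {1..m}"
  proof
    fix ys assume "ys \<in> (\<lambda>\<pi>. map \<pi> [1..<Suc m]) ` {\<pi>. \<pi> permutes {1..m}}"
    then obtain \<pi> where p: "\<pi> permutes {1..m}" "ys = map \<pi> [1..<Suc m]" by auto
    have "set ys = \<pi> ` {1..m}" using p by auto
    also have "\<dots> = {1..m}" by (rule permutes_image[OF p(1)])
    finally have "set ys = {1..m}" .
    moreover have "distinct ys" using p permutes_inj_on[OF p(1)]
      by (simp add: distinct_map inj_on_subset atLeastLessThanSuc_atLeastAtMost)
    ultimately show "ys \<in> permutations_of_set {1..m}" by (simp add: permutations_of_set_def)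
  qed
  show "(\<lambda>xs x. if x \<in> {1..m} then xs ! (x - 1) else x) ` permutations_of_set {1..m} \<subseteq> {\<pi>. \<pi> permutes {1..m}}"
  proof
    fix f assume "f \<in> (\<lambda>xs x. if x \<in> {1..m} then xs ! (x - 1) else x) ` permutations_of_set {1..m}"
    then obtain xs where xs: "xs \<in> permutations_of_set {1..m}" "f = (\<lambda>x. if x \<in> {1..m} then xs ! (x - 1) else x)" by auto
    have d: "distinct xs" "set xs = {1..m}" "length xs = m"
      using xs(1) by (auto simp: permutations_of_set_def length_finite_permutations_of_set)
    have inj: "inj_on f {1..m}"
    proof (rule inj_onI)
      fix x y assume "x \<in> {1..m}" "y \<in> {1..m}" "f x = f y"
      then have "xs ! (x - 1) = xs ! (y - 1)" using xs(2) by simp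
      moreover have "x - 1 < length xs" "y - 1 < length xs" using d \<open>x \<in> {1..m}\<close> \<open>y \<in> {1..m}\<close> by auto
      ultimately have "x - 1 = y - 1" using nth_eq_iff_index_eq[OF d(1)] by blast
      then show "x = y" using \<open>x \<in> {1..m}\<close> \<open>y \<in> {1..m}\<close> by (simp only: atLeastAtMost_iff) arith
    qed
    have img: "f ` {1..m} = {1..m}"
    proof -
      have "f ` {1..m} = (\<lambda>i. xs ! i) ` {0..<m}"
      proof (rule set_eqI, rule iffI)
        fix y assume "y \<in> f ` {1..m}"
        then obtain x where "x \<in> {1..m}" "y = f x" by auto
        then show "y \<in> (\<lambda>i. xs ! i) ` {0..<m}" using xs(2) by (auto intro!: image_eqI[where x="x - 1"])
      next
        fix y assume "y \<in> (\<lambda>i. xs ! i) ` {0..<m}"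
        then obtain i where "i < m" "y = xs ! i" by auto
        then show "y \<in> f ` {1..m}" using xs(2) by (auto intro!: image_eqI[where x="Suc i"])
      qed
      also have "\<dots> = set xs"
      proof -
        have "(\<lambda>i. xs ! i) ` {0..<length xs} = set xs" by (auto simp: in_set_conv_nth)
        then show ?thesis using d(3) by simp
      qed
      finally show ?thesis using d by simp
    qed
    have "f permutes {1..m}"
      by (rule bij_imp_permutes) (use inj img xs(2) in \<open>auto simp: bij_betw_def\<close>)
    then show "f \<in> {\<pi>. \<pi> permutes {1..m}}" by simp
  qed
qed

lemma fl_map_upt:
  "fl c e (map f [Suc e..<Suc e + Suc m]) = map (\<lambda>j. fac c j (f j) (f (Suc j))) [Suc e..<Suc e + m]"
proof (induction m arbitrary: e)
  case 0 then show ?case by (simp add: upt_conv_Cons)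
next
  case (Suc m)
  have "[Suc e..<Suc e + Suc (Suc m)] = Suc e # Suc (Suc e) # [Suc (Suc (Suc e))..<Suc e + Suc (Suc m)]"
    by (simp add: upt_conv_Cons)
  moreover have "[Suc (Suc e)..<Suc (Suc e) + Suc m] = Suc (Suc e) # [Suc (Suc (Suc e))..<Suc e + Suc (Suc m)]"
    by (simp add: upt_conv_Cons)
  moreover have "[Suc e..<Suc e + Suc m] = Suc e # [Suc (Suc e)..<Suc (Suc e) + m]"
    by (simp add: upt_conv_Cons)
  ultimately show ?case using Suc.IH[of "Suc e"] by simp
qed

definition Hm :: "nat \<Rightarrow> int poly \<Rightarrow> int poly" where
  "Hm m p = (\<Sum>u\<le>m. smult (coeff p u) ([:-1,1:] ^ u * [:1,1:] ^ (m - u)))"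

lemma Hm_add: "Hm m (p + r) = Hm m p + Hm m r"
  by (simp add: Hm_def smult_add_left sum.distrib)

lemma Hm_smult: "Hm m (smult s p) = smult s (Hm m p)"
  by (simp add: Hm_def smult_sum_right)

lemma Hm_zero: "Hm m 0 = 0"
  by (simp add: Hm_def)

lemma Hm_sum: "Hm m (sum f A) = (\<Sum>a\<in>A. Hm m (f a))"
  by (induction A rule: infinite_finite_induct) (simp_all add: Hm_add Hm_zero)

lemma Hm_shiftY: "degree g \<le> m \<Longrightarrow> Hm (Suc m) g = [:1,1:] * Hm m g"
proof -
  assume d: "degree g \<le> m"
  have "Hm (Suc m) g = (\<Sum>u\<le>m. smult (coeff g u) ([:-1,1:] ^ u * [:1,1:] ^ (Suc m - u)))
        + smult (coeff g (Suc m)) ([:-1,1:] ^ Suc m * [:1,1:] ^ (Suc m - Suc m))"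
    by (simp add: Hm_def)
  also have "coeff g (Suc m) = 0" using d by (simp add: coeff_eq_0)
  also have "(\<Sum>u\<le>m. smult (coeff g u) ([:-1,1:] ^ u * [:1,1:] ^ (Suc m - u)))
      = (\<Sum>u\<le>m. [:1,1:] * smult (coeff g u) ([:-1,1:] ^ u * [:1,1:] ^ (m - u)))"
    by (rule sum.cong) (auto simp: Suc_diff_le algebra_simps)
  finally show ?thesis by (simp add: Hm_def sum_distrib_left)
qed

lemma Hm_shiftX: "Hm (Suc m) (pCons 0 r) = [:-1,1:] * Hm m r"
proof -
  have "Hm (Suc m) (pCons 0 r) = smult (coeff (pCons 0 r) 0) ([:-1,1:] ^ 0 * [:1,1:] ^ (Suc m - 0))
     + (\<Sum>u\<le>m. smult (coeff (pCons 0 r) (Suc u)) ([:-1,1:] ^ Suc u * [:1,1:] ^ (Suc m - Suc u)))"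
    unfolding Hm_def by (rule sum.atMost_Suc_shift)
  also have "\<dots> = (\<Sum>u\<le>m. [:-1,1:] * smult (coeff r u) ([:-1,1:] ^ u * [:1,1:] ^ (m - u)))"
    by (simp add: algebra_simps)
  finally show ?thesis by (simp add: Hm_def sum_distrib_left)
qed

lemma Hm_step:
  assumes "degree g \<le> m"
  shows "Hm (Suc m) ([:1,s:] * g) = ([:1,1:] + smult s [:-1,1:]) * Hm m g"
proof -
  have e: "[:1,s:] * g = g + pCons 0 (smult s g)" by simp
  have "Hm (Suc m) ([:1,s:] * g) = Hm (Suc m) g + Hm (Suc m) (pCons 0 (smult s g))"
    by (simp only: e Hm_add)
  also have "\<dots> = [:1,1:] * Hm m g + [:-1,1:] * Hm m (smult s g)"
    by (simp only: Hm_shiftY[OF assms] Hm_shiftX)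
  also have "\<dots> = ([:1,1:] + smult s [:-1,1:]) * Hm m g"
    by (simp only: Hm_smult distrib_right mult_smult_left mult_smult_right)
  finally show ?thesis .
qed

lemma Hm_prod:
  assumes "\<forall>p\<in>set L. \<exists>s. p = [:1, s:]"
  shows "Hm (length L) (prod_list L) = prod_list (map (\<lambda>p. [:1,1:] + smult (coeff p 1) [:-1,1:]) L)
     \<and> degree (prod_list L) \<le> length L"
  using assms
proof (induction L)
  case Nil then show ?case by (simp add: Hm_def)
next
  case (Cons a L)
  obtain s where a: "a = [:1, s:]" using Cons.prems by auto
  have IH: "Hm (length L) (prod_list L) = prod_list (map (\<lambda>p. [:1,1:] + smult (coeff p 1) [:-1,1:]) L)"
    "degree (prod_list L) \<le> length L" using Cons by auto
  have "degree (a * prod_list L) \<le> degree a + degree (prod_list L)" by (rule degree_mult_le)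
  also have "\<dots> \<le> 1 + length L" using IH(2) a by simp
  finally have dg: "degree (prod_list (a # L)) \<le> length (a # L)" by simp
  show ?case using Hm_step[OF IH(2), of s] IH(1) a dg by simp
qed

lemma prod_if_pow:
  "finite J \<Longrightarrow> (\<Prod>j\<in>J. if P j then [:0,2:] else [:2:]) = smult (2 ^ card J) ([:0,1::int:] ^ (card {j\<in>J. P j}))"
proof (induction J rule: finite_induct)
  case empty then show ?case by simp
next
  case (insert j J)
  have cP: "card {i\<in>insert j J. P i} = (if P j then Suc (card {i\<in>J. P i}) else card {i\<in>J. P i})"
  proof -
    have "{i\<in>insert j J. P i} = (if P j then insert j {i\<in>J. P i} else {i\<in>J. P i})" by auto
    then show ?thesis using insert by auto
  qed
  show ?case using insert cP by (cases "P j") (simp_all add: mult.commute)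
qed

lemma prod_if_monom:
  "finite J \<Longrightarrow> (\<Prod>j\<in>J. if P j then [:0,2:] else [:2:]) = smult (2 ^ card J) (monom (1::int) (card {j\<in>J. P j}))"
  by (simp add: prod_if_pow monom_altdef)

lemma H_perm:
  assumes "\<pi> permutes {1..Suc n}"
  shows "Hm n (prod_list (fl 1 0 (map \<pi> [1..<Suc (Suc n)]))) = smult (2 ^ n) (monom 1 (altdes (Suc n) \<pi>))"
proof -
  let ?L = "fl 1 0 (map \<pi> [1..<Suc (Suc n)])"
  have L: "?L = map (\<lambda>j. fac 1 j (\<pi> j) (\<pi> (Suc j))) [1..<Suc n]"
    using fl_map_upt[of 1 0 \<pi> n] by simp
  have lL: "length ?L = n" using L by simp
  have fa: "\<forall>p\<in>set ?L. \<exists>s. p = [:1,s:]" using fl_form by blast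
  from Hm_prod[OF fa] have "Hm (length ?L) (prod_list ?L) = prod_list (map (\<lambda>p. [:1,1:] + smult (coeff p 1) [:-1,1:]) ?L)"
    by (rule conjunct1)
  then have "Hm n (prod_list ?L) = prod_list (map (\<lambda>p. [:1,1:] + smult (coeff p 1) [:-1,1:]) ?L)"
    by (simp only: lL)
  also have "\<dots> = prod_list (map (\<lambda>j. if alt j (\<pi> j) (\<pi> (Suc j)) then [:0,2:] else [:2:]) [1..<Suc n])"
    unfolding L map_map by (intro arg_cong[where f=prod_list] map_cong refl) (simp add: fac_def)
  also have "\<dots> = (\<Prod>j\<in>{1..<Suc n}. if alt j (\<pi> j) (\<pi> (Suc j)) then [:0,2:] else [:2:])"
    by (simp only: prod.distinct_set_conv_list[OF distinct_upt, symmetric] set_upt)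
  also have "\<dots> = smult (2 ^ n) (monom 1 (card {j\<in>{1..<Suc n}. alt j (\<pi> j) (\<pi> (Suc j))}))"
    using card_atLeastLessThan[of 1 "Suc n"] by (simp only: prod_if_monom[OF finite_atLeastLessThan]) simp
  also have "card {j\<in>{1..<Suc n}. alt j (\<pi> j) (\<pi> (Suc j))} = altdes (Suc n) \<pi>"
    by (simp add: altdes_def alt_def)
  finally show ?thesis .
qed

lemma main_poly:
  "smult (2 ^ n) (\<Sum>\<pi>\<in>{\<pi>. \<pi> permutes {1..Suc n}}. monom (1::int) (altdes (Suc n) \<pi>)) = Hm n (Qp n)"
proof -
  have "smult (2 ^ n) (\<Sum>\<pi>\<in>{\<pi>. \<pi> permutes {1..Suc n}}. monom (1::int) (altdes (Suc n) \<pi>))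
      = (\<Sum>\<pi>\<in>{\<pi>. \<pi> permutes {1..Suc n}}. Hm n (prod_list (fl 1 0 (map \<pi> [1..<Suc (Suc n)]))))"
    unfolding smult_sum_right
  proof (rule sum.cong)
    fix x assume "x \<in> {\<pi>. \<pi> permutes {1..Suc n}}"
    then have "x permutes {1..Suc n}" by simp
    from H_perm[OF this] show "smult (2 ^ n) (monom 1 (altdes (Suc n) x)) = Hm n (prod_list (fl 1 0 (map x [1..<Suc (Suc n)])))"
      by simp
  qed simp
  also have "\<dots> = (\<Sum>xs\<in>permutations_of_set {1..Suc n}. Hm n (prod_list (fl 1 0 xs)))"
    by (rule sum.reindex_bij_betw[OF perm_list_bij])
  also have "\<dots> = Hm n (Sg 1 {1..Suc n})" by (simp add: Sg_def Hm_sum)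
  finally show ?thesis using Sg_eq_Qp[of n] by simp
qed




lemma neg_even_pow: "(- (p::int poly)) ^ (2*k) = p ^ (2*k)"
  by (simp add: power_mult)

lemma sum_even_odd:
  fixes f :: "nat \<Rightarrow> 'a::comm_monoid_add" and N :: nat
  shows "(\<Sum>u<2*N. f u) = (\<Sum>k<N. f (2*k) + f (2*k+1))"
  by (induction N) (simp_all add: algebra_simps)

lemma q_odd: "odd u \<Longrightarrow> q n u = 0"
proof (cases "u \<le> n + 1")
  case True
  assume "odd u"
  then have "even (n + (n + 1 - u))" using True by (simp add: even_add)
  then show ?thesis by (simp add: q_def pcoeff_parity)
next
  case False then show ?thesis by (simp add: q_def)
qed

lemma final_sum:
  fixes n s :: nat
  shows "coeff (Hm n (Qp n)) s = (\<Sum>k=0..(n+1) div 2.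
       (int n - 2 * int k + 1) * pcoeff n (n + 1 - 2*k) * Ecoef n k s)"
proof -
  define f where "f u = q n u * coeff ([:-1,1:] ^ u * [:1,1:] ^ (n - u)) s" for u
  define N where "N = (n + 1) div 2 + 1"
  have "coeff (Hm n (Qp n)) s = (\<Sum>u\<le>n. f u)"
    by (simp add: Hm_def coeff_sum coeff_Qp f_def)
  also have "\<dots> = (\<Sum>u<2*N. f u)"
  proof (rule sum.mono_neutral_left)
    show "{..n} \<subseteq> {..<2*N}" unfolding N_def by auto
    show "\<forall>i\<in>{..<2 * N} - {..n}. f i = 0" by (auto simp: f_def q_def)
  qed simp
  also have "\<dots> = (\<Sum>k<N. f (2*k))"
    unfolding sum_even_odd by (simp add: f_def q_odd)
  also have "\<dots> = (\<Sum>k=0..(n+1) div 2. f (2*k))"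
    unfolding N_def by (simp add: atLeast0AtMost lessThan_Suc_atMost)
  also have "\<dots> = (\<Sum>k=0..(n+1) div 2. (int n - 2 * int k + 1) * pcoeff n (n + 1 - 2*k) * Ecoef n k s)"
  proof (rule sum.cong)
    fix k assume "k \<in> {0..(n+1) div 2}"
    then have k: "2 * k \<le> n + 1" by auto
    have pw: "[:-1,1:] ^ (2*k) = ([:1,-1:] ^ (2*k) :: int poly)"
    proof -
      have "[:-1,1:] = - ([:1,-1:] :: int poly)" by simp
      then show ?thesis by (simp only: neg_even_pow)
    qed
    show "f (2*k) = (int n - 2 * int k + 1) * pcoeff n (n + 1 - 2*k) * Ecoef n k s"
      unfolding f_def q_def Ecoef_def pw using k by (simp add: of_nat_diff)
  qed simp
  finally show ?thesis .
qed

theorem mainTheorem2: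
  fixes n s :: nat
  assumes "n \<ge> 2" and "1 \<le> s" and "s \<le> n"
  shows "real (altEuler (n+1) s) =
    (1 / 2 ^ n) * (\<Sum>k=0..(n+1) div 2.
       real_of_int ((int n - 2 * int k + 1) * pcoeff n (n + 1 - 2*k) * Ecoef n k s))"
proof -
  let ?A = "(\<Sum>\<pi>\<in>{\<pi>. \<pi> permutes {1..Suc n}}. monom (1::int) (altdes (Suc n) \<pi>))"
  have nn: "coeff ?A s \<ge> 0" by (simp add: coeff_sum coeff_monom sum_nonneg)
  have ae: "altEuler (n+1) s = nat (coeff ?A s)" by (simp add: altEuler_def)
  have "2 ^ n * coeff ?A s = coeff (Hm n (Qp n)) s"
    using arg_cong[OF main_poly[of n], of "\<lambda>p. coeff p s"] by simp
  also have "\<dots> = (\<Sum>k=0..(n+1) div 2. (int n - 2 * int k + 1) * pcoeff n (n + 1 - 2*k) * Ecoef n k s)"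
    by (rule final_sum)
  finally have eq: "2 ^ n * coeff ?A s = (\<Sum>k=0..(n+1) div 2. (int n - 2 * int k + 1) * pcoeff n (n + 1 - 2*k) * Ecoef n k s)" .
  have "real (altEuler (n+1) s) = real_of_int (coeff ?A s)" using ae nn by simp
  also have "\<dots> = (1 / 2 ^ n) * real_of_int (2 ^ n * coeff ?A s)" by simp
  also have "\<dots> = (1 / 2 ^ n) * (\<Sum>k=0..(n+1) div 2.
       real_of_int ((int n - 2 * int k + 1) * pcoeff n (n + 1 - 2*k) * Ecoef n k s))"
    unfolding eq by (simp only: of_int_sum)
  finally show ?thesis .
qed


end
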